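(* Let $V$ be a finite set with $K = |V| \geq 1$ elements, let $\epsilon \geq 0$, and let $f : 2^V \to \mathbb{R}_{\geq 0}$. Then the $\epsilon$-pruning $\tilde f$ of $f$ is $\epsilon$-close to $f$; that is, for all $T, U \subseteq V$ with $|T| \leq 1$, $$(1-\epsilon)\, f[T,U] \;\leq\; \tilde f[T,U] \;\leq\; f[T,U].$$
   Context: For $g : 2^V \to \mathbb{R}_{\geq 0}$ and $T, U \subseteq V$, the interval sum is $g[T,U] := \sum_{S:\, T \subseteq S \subseteq U} g(S)$ (an empty sum, equal to $0$, if $T \not\subseteq U$). A function $\tilde f : 2^V \to \mathbb{R}_{\geq 0}$ is called $\epsilon$-close to $f$ if $(1-\epsilon) f[T,U] \leq \tilde f[T,U] \leq f[T,U]$ for all $T,U \subseteq V$ with $|T| \leq 1$. For $j \in S \subseteq V$ define $$\psi(j,S) = \sum_{R:\, j \in R \subseteq S} f(R)\,\bigl(1 + 1/K\bigr)^{|R|-K}\, K^{|R|-|S|}.$$ The $\epsilon$-pruning of $f$ is the function $\tilde f : 2^V \to \mathbb{R}_{\geq 0}$ given by $\tilde f(S) = 0$ if $S \neq \emptyset$ and $f(S) < \epsilon \cdot \psi(j,S)$ for every $j \in S$, and $\tilde f(S) = f(S)$ otherwise (in particular $\tilde f(\emptyset) = f(\emptyset)$). *)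

theory Defs
  imports Complex_Main
begin

text \<open>Interval sum g[T,U] = sum of g(S) over T \<subseteq> S \<subseteq> U (empty sum if T is not a subset of U).\<close>
definition interval_sum :: "('a set \<Rightarrow> real) \<Rightarrow> 'a set \<Rightarrow> 'a set \<Rightarrow> real" where
  "interval_sum g T U = (\<Sum>S\<in>{S. T \<subseteq> S \<and> S \<subseteq> U}. g S)"

definition psi :: "'a set \<Rightarrow> ('a set \<Rightarrow> real) \<Rightarrow> 'a \<Rightarrow> 'a set \<Rightarrow> real" where
  "psi V f j S = (let K = real (card V) in
     (\<Sum>R\<in>{R. j \<in> R \<and> R \<subseteq> S}.
        f R * (1 + 1 / K) powi (int (card R) - int (card V)) * K powi (int (card R) - int (card S))))"

definition eps_pruning :: "'a set \<Rightarrow> real \<Rightarrow> ('a set \<Rightarrow> real) \<Rightarrow> 'a set \<Rightarrow> real" where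
  "eps_pruning V \<epsilon> f S = (if S \<noteq> {} \<and> (\<forall>j\<in>S. f S < \<epsilon> * psi V f j S) then 0 else f S)"

definition eps_close :: "'a set \<Rightarrow> real \<Rightarrow> ('a set \<Rightarrow> real) \<Rightarrow> ('a set \<Rightarrow> real) \<Rightarrow> bool" where
  "eps_close V \<epsilon> f ft = (\<forall>T U. T \<subseteq> V \<and> U \<subseteq> V \<and> card T \<le> 1 \<longrightarrow>
      (1 - \<epsilon>) * interval_sum f T U \<le> interval_sum ft T U \<and> interval_sum ft T U \<le> interval_sum f T U)"

end

theory Submission
  imports Defs
begin

lemma pow_subset_sum:
  fixes x :: real
  assumes "finite W"
  shows "(\<Sum>A\<in>Pow W. x ^ card A) = (1 + x) ^ card W"
  using assms
proof (induction W rule: finite_induct)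
  case empty
  then show ?case by simp
next
  case (insert a W)
  have disj: "Pow W \<inter> insert a ` Pow W = {}" using insert by auto
  have inj: "inj_on (insert a) (Pow W)"
  proof (rule inj_onI)
    fix A B assume "A \<in> Pow W" "B \<in> Pow W" "insert a A = insert a B"
    moreover have "a \<notin> A" "a \<notin> B" using insert \<open>A \<in> Pow W\<close> \<open>B \<in> Pow W\<close> by auto
    ultimately show "A = B" by (metis insert_ident)
  qed
  have "(\<Sum>A\<in>Pow (insert a W). x ^ card A)
      = (\<Sum>A\<in>Pow W. x ^ card A) + (\<Sum>A\<in>insert a ` Pow W. x ^ card A)"
    unfolding Pow_insert using insert disj by (simp add: sum.union_disjoint)
  also have "(\<Sum>A\<in>insert a ` Pow W. x ^ card A) = (\<Sum>A\<in>Pow W. x ^ card (insert a A))"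
    using inj by (simp add: sum.reindex)
  also have "\<dots> = (\<Sum>A\<in>Pow W. x * x ^ card A)"
  proof (rule sum.cong)
    fix A assume "A \<in> Pow W"
    then have "finite A" "a \<notin> A" using insert finite_subset by auto
    then show "x ^ card (insert a A) = x * x ^ card A" by simp
  qed simp
  finally show ?case using insert by (simp add: sum_distrib_left[symmetric] algebra_simps)
qed

lemma interval_power_sum:
  fixes x :: real
  assumes "finite U" "R \<subseteq> U"
  shows "(\<Sum>S\<in>{S. R \<subseteq> S \<and> S \<subseteq> U}. x ^ (card S - card R)) = (1 + x) ^ (card U - card R)"
proof -
  have inj: "inj_on (\<lambda>A. R \<union> A) (Pow (U - R))" by (rule inj_onI) auto
  have img: "(\<lambda>A. R \<union> A) ` Pow (U - R) = {S. R \<subseteq> S \<and> S \<subseteq> U}"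
  proof
    show "{S. R \<subseteq> S \<and> S \<subseteq> U} \<subseteq> (\<lambda>A. R \<union> A) ` Pow (U - R)"
    proof
      fix S assume "S \<in> {S. R \<subseteq> S \<and> S \<subseteq> U}"
      then have "S = R \<union> (S - R)" "S - R \<in> Pow (U - R)" by auto
      then show "S \<in> (\<lambda>A. R \<union> A) ` Pow (U - R)" by blast
    qed
  qed (use assms in auto)
  have "(\<Sum>S\<in>{S. R \<subseteq> S \<and> S \<subseteq> U}. x ^ (card S - card R))
      = (\<Sum>A\<in>Pow (U - R). x ^ (card (R \<union> A) - card R))"
    by (simp add: img[symmetric] sum.reindex[OF inj])
  also have "\<dots> = (\<Sum>A\<in>Pow (U - R). x ^ card A)"
  proof (rule sum.cong)
    fix A assume A: "A \<in> Pow (U - R)"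
    have fR: "finite R" using assms finite_subset by auto
    have fA: "finite A" using A assms finite_subset[of A U] by auto
    have "card (R \<union> A) = card R + card A" using A fR fA by (subst card_Un_disjoint) auto
    then show "x ^ (card (R \<union> A) - card R) = x ^ card A" by simp
  qed simp
  also have "\<dots> = (1 + x) ^ card (U - R)" using assms by (simp add: pow_subset_sum)
  also have "card (U - R) = card U - card R" using assms by (simp add: card_Diff_subset finite_subset)
  finally show ?thesis .
qed

lemma powi_conv:
  fixes K :: real
  assumes "K \<noteq> 0" "a \<le> b"
  shows "K powi (int a - int b) = (1 / K) ^ (b - a)"
proof -
  have "int a - int b = - int (b - a)" using assms by simp
  then have "K powi (int a - int b) = K powi (- int (b - a))" by (simp only:)
  also have "\<dots> = inverse (K powi int (b - a))" by (rule power_int_minus)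
  also have "\<dots> = inverse (K ^ (b - a))" by (simp only: power_int_of_nat)
  also have "\<dots> = (inverse K) ^ (b - a)" by (rule power_inverse[symmetric])
  also have "\<dots> = (1 / K) ^ (b - a)" by (simp only: inverse_eq_divide)
  finally show ?thesis .
qed

theorem theorem1:
  fixes V :: "'a set" and \<epsilon> :: real and f :: "'a set \<Rightarrow> real"
  assumes "finite V" and "card V \<ge> 1" and "\<epsilon> \<ge> 0"
    and "\<And>S. S \<subseteq> V \<Longrightarrow> f S \<ge> 0"
  shows "eps_close V \<epsilon> f (eps_pruning V \<epsilon> f)"
  unfolding eps_close_def
proof (intro allI impI conjI)
  fix T U assume TU: "T \<subseteq> V \<and> U \<subseteq> V \<and> card T \<le> 1"
  define K where "K = real (card V)"
  define x where "x = 1 / K"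
  define c where "c R = (1 + x) powi (int (card R) - int (card V))" for R :: "'a set"
  define I where "I T' U' = {S. T' \<subseteq> S \<and> S \<subseteq> U'}" for T' U' :: "'a set"
  define ft where "ft = eps_pruning V \<epsilon> f"
  have Kpos: "K > 0" using assms(2) K_def by simp
  have xpos: "x \<ge> 0" using Kpos x_def by simp
  have cnn: "c R \<ge> 0" for R unfolding c_def using xpos by simp
  have fU: "finite U" using TU assms(1) finite_subset[of U V] by simp
  have finI: "finite (I A B)" if "finite B" for A B
  proof -
    have "I A B \<subseteq> Pow B" unfolding I_def by auto
    then show ?thesis by (rule finite_subset) (simp add: that)
  qed
  have fnn: "f S \<ge> 0" if "S \<subseteq> U" for S using assms(4) TU that by auto
  have ftle: "ft S \<le> f S" if "S \<subseteq> U" for S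
    using fnn[OF that] unfolding ft_def eps_pruning_def by auto
  show "interval_sum ft T U \<le> interval_sum f T U"
    unfolding interval_sum_def ft_def[symmetric] by (rule sum_mono) (use ftle in auto)
  define phi where "phi S = (\<Sum>R\<in>I T S. f R * c R * x ^ (card S - card R))" for S
  have psi_eq: "psi V f j S = (\<Sum>R\<in>{R. j \<in> R \<and> R \<subseteq> S}. f R * c R * x ^ (card S - card R))"
    if "S \<subseteq> U" for j S
    unfolding psi_def Let_def K_def[symmetric]
  proof (rule sum.cong)
    fix R assume "R \<in> {R. j \<in> R \<and> R \<subseteq> S}"
    then have "R \<subseteq> S" by auto
    then have "card R \<le> card S" using card_mono[OF finite_subset[OF that fU]] by simp
    then show "f R * (1 + 1 / K) powi (int (card R) - int (card V)) * K powi (int (card R) - int (card S))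
        = f R * c R * x ^ (card S - card R)"
      unfolding c_def x_def using powi_conv[OF _ \<open>card R \<le> card S\<close>, of K] Kpos by simp
  qed simp
  have phinn: "phi S \<ge> 0" if "S \<subseteq> U" for S
    unfolding phi_def I_def
    by (rule sum_nonneg) (use fnn cnn xpos that in \<open>auto intro!: mult_nonneg_nonneg\<close>)
  define d where "d S = f S - ft S" for S
  have dle: "d S \<le> \<epsilon> * phi S" if S: "S \<in> I T U" for S
  proof (cases "S \<noteq> {} \<and> (\<forall>j\<in>S. f S < \<epsilon> * psi V f j S)")
    case False
    then have "d S = 0" unfolding d_def ft_def eps_pruning_def by auto
    then show ?thesis using phinn[of S] S assms(3) unfolding I_def by auto
  next
    case True
    then have dS: "d S = f S" unfolding d_def ft_def eps_pruning_def by auto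
    have SU: "S \<subseteq> U" "T \<subseteq> S" using S unfolding I_def by auto
    have "f S < \<epsilon> * phi S"
    proof (cases "T = {}")
      case True
      from \<open>S \<noteq> {} \<and> _\<close> obtain j where j: "j \<in> S" "f S < \<epsilon> * psi V f j S" by auto
      have "psi V f j S \<le> phi S"
        unfolding psi_eq[OF SU(1)] phi_def
      proof (rule sum_mono2)
        show "finite (I T S)" using finI[OF finite_subset[OF SU(1) fU]] .
        show "{R. j \<in> R \<and> R \<subseteq> S} \<subseteq> I T S" unfolding I_def using True by auto
        show "\<And>b. b \<in> I T S - {R. j \<in> R \<and> R \<subseteq> S} \<Longrightarrow> 0 \<le> f b * c b * x ^ (card S - card b)"
          using fnn cnn xpos SU unfolding I_def by (auto intro!: mult_nonneg_nonneg)
      qed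
      then have "\<epsilon> * psi V f j S \<le> \<epsilon> * phi S" using assms(3) by (rule mult_left_mono)
      then show ?thesis using j(2) by linarith
    next
      case False
      then obtain k where "k \<in> T" by auto
      have fT: "finite T" using finite_subset[OF _ fU] SU by blast
      have "T = {k}" using TU \<open>k \<in> T\<close> fT
      proof -
        have "\<forall>a1\<in>T. \<forall>a2\<in>T. a1 = a2" using card_le_Suc0_iff_eq[OF fT] TU by simp
        then show ?thesis using \<open>k \<in> T\<close> by blast
      qed
      then have "{R. k \<in> R \<and> R \<subseteq> S} = I T S" unfolding I_def by auto
      moreover have "f S < \<epsilon> * psi V f k S" using True SU \<open>k \<in> T\<close> by auto
      ultimately show "f S < \<epsilon> * phi S" unfolding psi_eq[OF SU(1)] phi_def by simp
    qed
    then show ?thesis using dS by simp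
  qed
  have fIU: "finite (I T U)" using finI[OF fU] .
  have cU: "card R \<le> card U" if "R \<subseteq> U" for R using card_mono[OF fU that] .
  have inner: "(\<Sum>S\<in>I R U. x ^ (card S - card R)) = (1 + x) ^ (card U - card R)"
    if "R \<subseteq> U" for R unfolding I_def using interval_power_sum[OF fU that] .
  have cmul: "c R * (1 + x) ^ (card U - card R) = (1 + x) powi (int (card U) - int (card V))"
    if "R \<subseteq> U" for R
  proof -
    have "(1 + x) ^ (card U - card R) = (1 + x) powi (int (card U) - int (card R))"
    proof -
      have e: "int (card U) - int (card R) = int (card U - card R)" using cU[OF that] by simp
      show ?thesis by (simp only: e power_int_of_nat)
    qed
    moreover have "(1 + x) powi ((int (card R) - int (card V)) + (int (card U) - int (card R)))
       = (1 + x) powi (int (card R) - int (card V)) * (1 + x) powi (int (card U) - int (card R))"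
      using xpos by (intro power_int_add) simp
    ultimately show ?thesis unfolding c_def by simp
  qed
  have swap: "(\<Sum>S\<in>I T U. phi S) = (\<Sum>R\<in>I T U. f R * c R * (\<Sum>S\<in>I R U. x ^ (card S - card R)))"
  proof -
    have "(\<Sum>S\<in>I T U. phi S) = (\<Sum>S\<in>I T U. \<Sum>R\<in>{R. R \<in> I T U \<and> R \<subseteq> S}. f R * c R * x ^ (card S - card R))"
      unfolding phi_def
    proof (rule sum.cong)
      fix S assume "S \<in> I T U"
      then have "I T S = {R. R \<in> I T U \<and> R \<subseteq> S}" unfolding I_def by auto
      then show "(\<Sum>R\<in>I T S. f R * c R * x ^ (card S - card R)) =
          (\<Sum>R\<in>{R. R \<in> I T U \<and> R \<subseteq> S}. f R * c R * x ^ (card S - card R))" by simp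
    qed simp
    also have "\<dots> = (\<Sum>R\<in>I T U. \<Sum>S\<in>{S. S \<in> I T U \<and> R \<subseteq> S}. f R * c R * x ^ (card S - card R))"
      by (rule sum.swap_restrict[OF fIU fIU])
    also have "\<dots> = (\<Sum>R\<in>I T U. f R * c R * (\<Sum>S\<in>I R U. x ^ (card S - card R)))"
    proof (rule sum.cong)
      fix R assume "R \<in> I T U"
      then have "{S. S \<in> I T U \<and> R \<subseteq> S} = I R U" unfolding I_def by auto
      then show "(\<Sum>S\<in>{S. S \<in> I T U \<and> R \<subseteq> S}. f R * c R * x ^ (card S - card R)) =
          f R * c R * (\<Sum>S\<in>I R U. x ^ (card S - card R))" by (simp add: sum_distrib_left)
    qed simp
    finally show ?thesis .
  qed
  have pw: "(1 + x) powi (int (card U) - int (card V)) \<le> 1"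
  proof -
    have "card U \<le> card V" using card_mono[OF assms(1)] TU by blast
    then have "(1 + x) powi (int (card U) - int (card V)) \<le> (1 + x) powi 0"
      using xpos by (intro power_int_increasing) auto
    then show ?thesis by simp
  qed
  have "(\<Sum>S\<in>I T U. phi S) = (\<Sum>R\<in>I T U. f R * (1 + x) powi (int (card U) - int (card V)))"
    unfolding swap
  proof (rule sum.cong)
    fix R assume "R \<in> I T U"
    then have RU: "R \<subseteq> U" unfolding I_def by auto
    show "f R * c R * (\<Sum>S\<in>I R U. x ^ (card S - card R)) = f R * (1 + x) powi (int (card U) - int (card V))"
      using inner[OF RU] cmul[OF RU] by (simp add: mult.assoc)
  qed simp
  also have "\<dots> \<le> (\<Sum>R\<in>I T U. f R)"
  proof (rule sum_mono)
    fix R assume "R \<in> I T U"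
    then have "f R \<ge> 0" using fnn unfolding I_def by auto
    then show "f R * (1 + x) powi (int (card U) - int (card V)) \<le> f R"
      using mult_left_mono[OF pw \<open>f R \<ge> 0\<close>] by simp
  qed
  finally have phisum: "(\<Sum>S\<in>I T U. phi S) \<le> (\<Sum>R\<in>I T U. f R)" .
  have "(\<Sum>S\<in>I T U. d S) \<le> (\<Sum>S\<in>I T U. \<epsilon> * phi S)"
    by (rule sum_mono) (rule dle)
  also have "\<dots> = \<epsilon> * (\<Sum>S\<in>I T U. phi S)" by (simp add: sum_distrib_left)
  also have "\<dots> \<le> \<epsilon> * (\<Sum>R\<in>I T U. f R)" using phisum assms(3) by (rule mult_left_mono)
  finally have dsum: "(\<Sum>S\<in>I T U. d S) \<le> \<epsilon> * (\<Sum>R\<in>I T U. f R)" .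
  have "(\<Sum>S\<in>I T U. d S) = (\<Sum>S\<in>I T U. f S) - (\<Sum>S\<in>I T U. ft S)"
    unfolding d_def by (simp add: sum_subtractf)
  then show "(1 - \<epsilon>) * interval_sum f T U \<le> interval_sum (eps_pruning V \<epsilon> f) T U"
    using dsum unfolding interval_sum_def ft_def[symmetric] I_def[symmetric]
    by (simp add: algebra_simps)
qed

end
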